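(* Let $A$ be a power bounded linear operator of a Banach space $X$, i.e. $\sup_{k\ge0}\|A^k\|<\infty$. Let $\|x\|_1:=\sup_{k\geq0}\|A^{k}x\|$ for $x\in X$. Then for any $v\in X$ there is a metric functional $h$ of $X$ equipped with the metric $d_1(x,y)=\|x-y\|_1$ and base point $0$, such that \[ h\Big(\sum_{k=0}^{n-1}A^{k}v\Big)\leq-n\tau\quad\text{for all }n>0, \] where $\tau=\inf_{x\in X}\|Ax+v-x\|_1$.
   Context: For a metric space $(X,d_1)$ with base point $0$, let $\mathrm{Hom}(X,\mathbb{R})$ be the set of $1$-Lipschitz functions $X\to\mathbb{R}$ with the topology of pointwise convergence and $h_y(\cdot)=d_1(\cdot,y)-d_1(0,y)$. A metric functional is an element of the closure of $\{h_y:y\in X\}$ in $\mathrm{Hom}(X,\mathbb{R})$. *)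

theory Defs
  imports "HOL-Analysis.Analysis"
begin

definition lip1 :: "('a \<Rightarrow> 'a \<Rightarrow> real) \<Rightarrow> ('a \<Rightarrow> real) \<Rightarrow> bool" where
  "lip1 d f \<longleftrightarrow> (\<forall>x y. \<bar>f x - f y\<bar> \<le> d x y)"

definition horofun :: "('a \<Rightarrow> 'a \<Rightarrow> real) \<Rightarrow> 'a \<Rightarrow> 'a \<Rightarrow> ('a \<Rightarrow> real)" where
  "horofun d x0 y = (\<lambda>x. d x y - d x0 y)"

text \<open>Metric functional: element of Hom(X,R) in the closure of {h_y} for the
  topology of pointwise convergence (product topology on 'a => real).\<close>
definition metric_functional :: "('a \<Rightarrow> 'a \<Rightarrow> real) \<Rightarrow> 'a \<Rightarrow> ('a \<Rightarrow> real) \<Rightarrow> bool" where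
  "metric_functional d x0 h \<longleftrightarrow> lip1 d h \<and> h \<in> closure (range (horofun d x0))"

definition power_bounded :: "('a::real_normed_vector \<Rightarrow> 'a) \<Rightarrow> bool" where
  "power_bounded A \<longleftrightarrow> bdd_above (range (\<lambda>k. onorm (A ^^ k)))"

definition norm1 :: "('a::real_normed_vector \<Rightarrow> 'a) \<Rightarrow> 'a \<Rightarrow> real" where
  "norm1 A x = (SUP k. norm ((A ^^ k) x))"

end

theory Submission
  imports Defs
begin


lemma blf_pow:
  fixes A :: "'a::real_normed_vector \<Rightarrow> 'a"
  shows "bounded_linear A \<Longrightarrow> bounded_linear (A ^^ k)"
proof (induction k)
  case 0
  show ?case using bounded_linear_ident[unfolded id_def[symmetric]] by simp
next
  case (Suc k)
  then show ?case using bounded_linear_compose[of A "A ^^ k"] by (simp add: comp_def)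
qed
lemma lin_pow:
  fixes A :: "'a::real_normed_vector \<Rightarrow> 'a"
  shows "bounded_linear A \<Longrightarrow> linear (A ^^ k)"
  by (rule bounded_linear.linear[OF blf_pow])
lemma bdd_norm:
  assumes "bounded_linear A" "power_bounded A"
  shows "bdd_above (range (\<lambda>k. norm ((A ^^ k) x)))"
proof -
  obtain M where M: "\<And>k. onorm (A ^^ k) \<le> M"
    using assms(2) unfolding power_bounded_def bdd_above_def by blast
  have Mx: "norm ((A ^^ k) x) \<le> M * norm x" for k
  proof -
    have "norm ((A ^^ k) x) \<le> onorm (A ^^ k) * norm x" by (rule onorm[OF blf_pow[OF assms(1)]])
    also have "\<dots> \<le> M * norm x" by (rule mult_right_mono[OF M norm_ge_zero])
    finally show ?thesis .
  qed
  show ?thesis by (rule bdd_aboveI2, rule Mx)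
qed

lemma norm1_ge:
  assumes "bounded_linear A" "power_bounded A"
  shows "norm ((A ^^ k) x) \<le> norm1 A x"
  unfolding norm1_def by (rule cSUP_upper[OF UNIV_I bdd_norm[OF assms]])

lemma norm1_nonneg:
  assumes "bounded_linear A" "power_bounded A"
  shows "0 \<le> norm1 A x"
  by (rule order_trans[OF norm_ge_zero norm1_ge[OF assms]])

lemma norm1_add:
  assumes "bounded_linear A" "power_bounded A"
  shows "norm1 A (x + y) \<le> norm1 A x + norm1 A y"
  unfolding norm1_def[of A "x+y"]
proof (rule cSUP_least)
  fix k
  have "norm ((A ^^ k) (x + y)) = norm ((A ^^ k) x + (A ^^ k) y)"
    using linear_add[OF lin_pow[OF assms(1)]] by simp
  also have "\<dots> \<le> norm ((A ^^ k) x) + norm ((A ^^ k) y)" by (rule norm_triangle_ineq)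
  also have "\<dots> \<le> norm1 A x + norm1 A y" using norm1_ge[OF assms] by (simp add: add_mono)
  finally show "norm ((A ^^ k) (x + y)) \<le> norm1 A x + norm1 A y" .
qed simp

lemma norm1_minus:
  assumes "bounded_linear A"
  shows "norm1 A (- x) = norm1 A x"
proof -
  have "(A ^^ k) (- x) = - (A ^^ k) x" for k
    using linear_neg[OF lin_pow[OF assms]] by simp
  then show ?thesis unfolding norm1_def by simp
qed

lemma norm1_scale:
  assumes "bounded_linear A" "power_bounded A"
  shows "norm1 A (c *\<^sub>R x) \<le> \<bar>c\<bar> * norm1 A x"
  unfolding norm1_def[of A "c *\<^sub>R x"]
proof (rule cSUP_least)
  fix k
  have "norm ((A ^^ k) (c *\<^sub>R x)) = \<bar>c\<bar> * norm ((A ^^ k) x)"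
    using linear_scale[OF lin_pow[OF assms(1)]] by simp
  also have "\<dots> \<le> \<bar>c\<bar> * norm1 A x" using norm1_ge[OF assms] by (simp add: mult_left_mono)
  finally show "norm ((A ^^ k) (c *\<^sub>R x)) \<le> \<bar>c\<bar> * norm1 A x" .
qed simp

lemma norm1_pow:
  assumes "bounded_linear A" "power_bounded A"
  shows "norm1 A ((A ^^ j) x) \<le> norm1 A x"
  unfolding norm1_def[of A "(A ^^ j) x"]
proof (rule cSUP_least)
  fix k
  have "(A ^^ k) ((A ^^ j) x) = (A ^^ (k + j)) x" by (simp add: funpow_add)
  then show "norm ((A ^^ k) ((A ^^ j) x)) \<le> norm1 A x" using norm1_ge[OF assms] by simp
qed simp

lemma norm1_tri:
  assumes "bounded_linear A" "power_bounded A"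
  shows "\<bar>norm1 A (x - z) - norm1 A (y - z)\<bar> \<le> norm1 A (x - y)"
proof -
  have 1: "norm1 A (x - z) \<le> norm1 A (x - y) + norm1 A (y - z)"
    using norm1_add[OF assms, of "x - y" "y - z"] by simp
  have 2: "norm1 A (y - z) \<le> norm1 A (y - x) + norm1 A (x - z)"
    using norm1_add[OF assms, of "y - x" "x - z"] by simp
  have 3: "norm1 A (y - x) = norm1 A (x - y)"
    using norm1_minus[OF assms(1), of "x - y"] by simp
  show ?thesis using 1 2 3 by linarith
qed

definition SS :: "('a::real_normed_vector \<Rightarrow> 'a) \<Rightarrow> 'a \<Rightarrow> nat \<Rightarrow> 'a" where
  "SS A v n = (\<Sum>k<n. (A ^^ k) v)"

lemma SS_split:
  assumes "bounded_linear A"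
  shows "SS A v (k + j) = SS A v k + (A ^^ k) (SS A v j)"
proof (induction j)
  case 0
  then show ?case using linear_0[OF lin_pow[OF assms]] by (simp add: SS_def)
next
  case (Suc j)
  have e1: "SS A v (k + Suc j) = SS A v (k + j) + (A ^^ (k + j)) v" by (simp add: SS_def)
  have e2: "(A ^^ (k + j)) v = (A ^^ k) ((A ^^ j) v)" by (simp add: funpow_add)
  have e3: "(A ^^ k) (SS A v j + (A ^^ j) v) = (A ^^ k) (SS A v j) + (A ^^ k) ((A ^^ j) v)"
    by (rule linear_add[OF lin_pow[OF assms]])
  have e4: "SS A v (Suc j) = SS A v j + (A ^^ j) v" by (simp add: SS_def)
  show ?case unfolding e1 e2 e4 e3 Suc by (simp only: add.assoc)
qed

lemma SS_Suc:
  assumes "bounded_linear A"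
  shows "A (SS A v j) + v = SS A v (Suc j)"
proof -
  have "SS A v 1 = v" by (simp add: SS_def)
  then show ?thesis using SS_split[OF assms, of v 1 j] by simp
qed



lemma tau_bound:
  fixes A :: "'a::real_normed_vector \<Rightarrow> 'a"
  assumes blf: "bounded_linear A" and pb: "power_bounded A" and n: "n > 0"
  shows "real n * (INF x. norm1 A (A x + v - x)) \<le> norm1 A (SS A v n)"
proof -
  define c where "c = 1 / real n"
  define x where "x = c *\<^sub>R (\<Sum>j<n. SS A v j)"
  have lA: "linear A" using blf bounded_linear.linear by blast
  have Ax: "A x = c *\<^sub>R (\<Sum>j<n. A (SS A v j))"
  proof -
    have "A x = c *\<^sub>R A (\<Sum>j<n. SS A v j)" unfolding x_def by (rule linear_scale[OF lA])
    also have "A (\<Sum>j<n. SS A v j) = (\<Sum>j<n. A (SS A v j))" by (rule linear_sum[OF lA])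
    finally show ?thesis .
  qed
  have vv: "v = c *\<^sub>R (\<Sum>j<n. v)"
  proof -
    have "(\<Sum>j<n. v) = real n *\<^sub>R v" using sum_constant_scaleR[of v "{..<n}"] by simp
    then show ?thesis using n by (simp add: c_def)
  qed
  have "A x + v - x = c *\<^sub>R ((\<Sum>j<n. A (SS A v j)) + (\<Sum>j<n. v) - (\<Sum>j<n. SS A v j))"
  proof -
    have "A x + v - x = c *\<^sub>R (\<Sum>j<n. A (SS A v j)) + v - c *\<^sub>R (\<Sum>j<n. SS A v j)"
      unfolding Ax by (simp add: x_def)
    also have "\<dots> = c *\<^sub>R (\<Sum>j<n. A (SS A v j)) + c *\<^sub>R (\<Sum>j<n. v) - c *\<^sub>R (\<Sum>j<n. SS A v j)"
      by (simp only: vv[symmetric])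
    finally show ?thesis by (simp add: algebra_simps)
  qed
  also have "(\<Sum>j<n. A (SS A v j)) + (\<Sum>j<n. v) - (\<Sum>j<n. SS A v j) = (\<Sum>j<n. SS A v (Suc j) - SS A v j)"
    by (simp add: SS_Suc[OF blf, symmetric] sum.distrib sum_subtractf)
  also have "\<dots> = SS A v n"
    by (simp add: sum_lessThan_telescope SS_def)
  finally have eq: "A x + v - x = c *\<^sub>R SS A v n" .
  have "(INF x. norm1 A (A x + v - x)) \<le> norm1 A (A x + v - x)"
    by (rule cINF_lower) (auto intro: bdd_belowI2[where m=0] norm1_nonneg[OF blf pb])
  also have "\<dots> \<le> c * norm1 A (SS A v n)"
    using norm1_scale[OF blf pb, of c "SS A v n"] eq by (simp add: c_def)
  finally have "(INF x. norm1 A (A x + v - x)) \<le> c * norm1 A (SS A v n)" .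
  then have "real n * (INF x. norm1 A (A x + v - x)) \<le> real n * (c * norm1 A (SS A v n))"
    by (rule mult_left_mono) simp
  also have "\<dots> = norm1 A (SS A v n)" using n by (simp add: c_def)
  finally show ?thesis .
qed

lemma window:
  fixes b :: "nat \<Rightarrow> real"
  assumes nn: "\<And>m. b m \<ge> 0" and N: "N > 0" and e: "e > 0"
  shows "\<exists>m\<ge>N. \<forall>k\<le>N. b (m - k) \<le> b m + e"
proof (rule ccontr)
  assume "\<not> ?thesis"
  then have H: "\<And>m. m \<ge> N \<Longrightarrow> \<exists>k\<le>N. b (m - k) > b m + e" by (meson not_le)
  define C where "C = Max (b ` {..<N})"
  have P: "b m + e * real (m div N) \<le> C" for m
  proof (induction m rule: less_induct)
    case (less m)
    show ?case
    proof (cases "m < N")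
      case True
      then show ?thesis unfolding C_def by (simp add: Max_ge)
    next
      case False
      then obtain k where k: "k \<le> N" "b (m - k) > b m + e" using H by (meson not_le)
      have k0: "k \<noteq> 0" using k e by (cases k) auto
      have lt: "m - k < m" using k0 False N by simp
      have IH: "b (m - k) + e * real ((m - k) div N) \<le> C" using less[OF lt] .
      have d1: "m div N = Suc ((m - N) div N)" using False N by (simp add: div_if)
      have d2: "(m - N) div N \<le> (m - k) div N" using k by (simp add: div_le_mono)
      have "real (m div N) \<le> real ((m - k) div N) + 1" using d1 d2 by simp
      then have "e * real (m div N) \<le> e * real ((m - k) div N) + e"
        using e by (metis distrib_left mult.right_neutral mult_left_mono less_imp_le)
      then show ?thesis using IH k(2) by linarith
    qed
  qed
  define K where "K = nat \<lceil>C / e\<rceil> + 1"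
  have "C / e < real K" unfolding K_def by linarith
  then have "C < e * real K" using e by (simp add: field_simps)
  moreover have "(N * K) div N = K" using N by simp
  ultimately have "b (N * K) < 0" using P[of "N * K"] by simp
  then show False using nn not_le by blast
qed



lemma box_compact:
  fixes r :: "'a \<Rightarrow> real"
  shows "compact {f. \<forall>x. -r x \<le> f x \<and> f x \<le> r x}"
proof -
  have eq: "{f. \<forall>x. -r x \<le> f x \<and> f x \<le> r x} = Pi\<^sub>E UNIV (\<lambda>x. {-r x..r x})"
    by (auto simp: PiE_UNIV_domain Pi_def)
  have "compactin (product_topology (\<lambda>_. euclidean) UNIV) (Pi\<^sub>E UNIV (\<lambda>x. {-r x..r x}))"
    unfolding compactin_PiE by (simp add: compactin_euclidean_iff)
  then show ?thesis unfolding eq euclidean_product_topology compactin_euclidean_iff .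
qed

lemma closed_coord_le:
  "closed {f :: 'a \<Rightarrow> real. f x \<le> c}"
  by (rule closed_Collect_le) (auto intro: continuous_on_const)

lemma closed_box:
  fixes r :: "'a \<Rightarrow> real"
  shows "closed {f. \<forall>x. -r x \<le> f x \<and> f x \<le> r x}"
  by (intro closed_Collect_all closed_Collect_conj closed_Collect_le continuous_on_const
      continuous_on_product_coordinates)

lemma closed_lip:
  fixes d :: "'a \<Rightarrow> 'a \<Rightarrow> real"
  shows "closed {f. \<forall>x y. \<bar>f x - f y\<bar> \<le> d x y}"
  by (intro closed_Collect_all closed_Collect_le continuous_on_const continuous_intros
      continuous_on_product_coordinates)



theorem corollary18:
  fixes A :: "'a::banach \<Rightarrow> 'a" and v :: 'a
  assumes "bounded_linear A"
    and "power_bounded A"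
  shows "\<exists>h. metric_functional (\<lambda>x y. norm1 A (x - y)) 0 h \<and>
     (\<forall>n::nat. n > 0 \<longrightarrow>
        h (\<Sum>k<n. (A ^^ k) v) \<le> - real n * (INF x. norm1 A (A x + v - x)))"
proof -
  note blf = assms(1) and pb = assms(2)
  define d where "d = (\<lambda>x y. norm1 A (x - y))"
  define H where "H = horofun d 0"
  define \<tau> where "\<tau> = (INF x. norm1 A (A x + v - x))"
  define B where "B = {f. \<forall>x. - norm1 A x \<le> f x \<and> f x \<le> norm1 A x}"
  define s where "s = closure (range H)"
  have Hy: "H y x = norm1 A (x - y) - norm1 A (0 - y)" for x y
    by (simp add: H_def horofun_def d_def)
  have "range H \<subseteq> B"
  proof clarify
    fix y
    have "\<bar>H y x\<bar> \<le> norm1 A x" for x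
      using norm1_tri[OF blf pb, of x y 0] unfolding Hy by simp
    then show "H y \<in> B" unfolding B_def by (simp add: abs_le_iff) (meson minus_le_iff)
  qed
  then have sB: "s \<subseteq> B" unfolding s_def B_def by (rule closure_minimal[OF _ closed_box])
  have cs: "compact s"
  proof -
    have "compact (B \<inter> s)" unfolding B_def s_def by (rule compact_Int_closed[OF box_compact closed_closure])
    then show ?thesis unfolding Int_absorb1[OF sB] .
  qed
  have Lip: "s \<subseteq> {f. \<forall>x y. \<bar>f x - f y\<bar> \<le> d x y}"
    unfolding s_def
  proof (rule closure_minimal[OF _ closed_lip], clarify)
    fix y x z
    show "\<bar>H y x - H y z\<bar> \<le> d x z"
      using norm1_tri[OF blf pb, of x y z] unfolding Hy d_def by simp
  qed
  define I where "I = {(n, e). (n::nat) > 0 \<and> (e::real) > 0}"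
  define F where "F = (\<lambda>(n, e). {h :: 'a \<Rightarrow> real. h (SS A v n) \<le> - real n * \<tau> + e})"
  define b where "b = (\<lambda>m. norm1 A (SS A v m) - real m * \<tau>)"
  have bnn: "b m \<ge> 0" for m
  proof (cases "m = 0")
    case True
    then show ?thesis using norm1_nonneg[OF blf pb] by (simp add: b_def)
  next
    case False
    then show ?thesis using tau_bound[OF blf pb, of m v] by (simp add: b_def \<tau>_def)
  qed
  have "s \<inter> (\<Inter>i\<in>I. F i) \<noteq> {}"
  proof (rule compact_imp_fip_image[OF cs])
    fix i assume "i \<in> I"
    obtain n e where i: "i = (n, e)" by fastforce
    show "closed (F i)" unfolding i F_def by (simp add: closed_coord_le)
  next
    fix I' assume fI: "finite I'" and sI: "I' \<subseteq> I"
    define N where "N = Max (insert 1 (fst ` I'))"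
    define e0 where "e0 = Min (insert 1 (snd ` I'))"
    have "1 \<le> N" unfolding N_def using fI by (intro Max_ge) auto
    then have N1: "N > 0" by simp
    have pos: "0 < snd p" if "p \<in> I'" for p using sI that unfolding I_def by (cases p) auto
    have e0p: "e0 > 0" unfolding e0_def using fI pos by (subst Min_gr_iff) auto
    have nN: "n \<le> N" if "(n, e) \<in> I'" for n e
    proof -
      have "n \<in> insert 1 (fst ` I')" by (rule insertI2, rule image_eqI[OF _ that], simp)
      then show ?thesis unfolding N_def using fI by (intro Max_ge) auto
    qed
    have ee: "e0 \<le> e" if "(n, e) \<in> I'" for n e
    proof -
      have "e \<in> insert 1 (snd ` I')" by (rule insertI2, rule image_eqI[OF _ that], simp)
      then show ?thesis unfolding e0_def using fI by (intro Min_le) auto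
    qed
    obtain m where m1: "m \<ge> N" and m2: "\<forall>k\<le>N. b (m - k) \<le> b m + e0"
      using window[of b N e0, OF bnn N1 e0p] by (elim exE conjE)
    have m: "m \<ge> N" "\<And>k. k \<le> N \<Longrightarrow> b (m - k) \<le> b m + e0" using m1 m2 by auto
    define y where "y = SS A v m"
    have "H y \<in> s" unfolding s_def using closure_subset[of "range H"] by blast
    moreover have "H y \<in> F i" if "i \<in> I'" for i
    proof -
      obtain n e where i: "i = (n, e)" by fastforce
      have ne: "(n, e) \<in> I'" using that i by simp
      have nm: "n \<le> m" using nN[OF ne] m(1) by simp
      have split: "SS A v m = SS A v n + (A ^^ n) (SS A v (m - n))"
        using SS_split[OF blf, of v n "m - n"] nm by simp
      have "norm1 A (SS A v n - y) = norm1 A (- ((A ^^ n) (SS A v (m - n))))"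
        unfolding y_def split by simp
      also have "\<dots> = norm1 A ((A ^^ n) (SS A v (m - n)))" by (rule norm1_minus[OF blf])
      also have "\<dots> \<le> norm1 A (SS A v (m - n))" by (rule norm1_pow[OF blf pb])
      finally have t1: "norm1 A (SS A v n - y) \<le> b (m - n) + real (m - n) * \<tau>"
        by (simp add: b_def)
      have t2: "norm1 A (0 - y) = b m + real m * \<tau>"
        using norm1_minus[OF blf, of y] by (simp add: b_def y_def)
      have t3: "b (m - n) \<le> b m + e0" using m(2) nN[OF ne] by simp
      have t4: "real (m - n) = real m - real n" using nm by (simp add: of_nat_diff)
      have "H y (SS A v n) \<le> - real n * \<tau> + e"
        unfolding Hy using t1 t2 t3 t4 ee[OF ne] by (simp add: algebra_simps)
      then show ?thesis unfolding i F_def by simp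
    qed
    ultimately show "s \<inter> (\<Inter>i\<in>I'. F i) \<noteq> {}" by blast
  qed
  then obtain h where hs: "h \<in> s" and hF: "\<And>i. i \<in> I \<Longrightarrow> h \<in> F i" by blast
  have "metric_functional (\<lambda>x y. norm1 A (x - y)) 0 h"
    unfolding metric_functional_def lip1_def
    using hs Lip unfolding s_def H_def d_def by blast
  moreover have "h (\<Sum>k<n. (A ^^ k) v) \<le> - real n * \<tau>" if n: "n > 0" for n
  proof (rule field_le_epsilon)
    fix e :: real assume "e > 0"
    then have "(n, e) \<in> I" using n by (simp add: I_def)
    then show "h (\<Sum>k<n. (A ^^ k) v) \<le> - real n * \<tau> + e"
      using hF[OF \<open>(n, e) \<in> I\<close>] by (simp add: F_def SS_def)
  qed
  ultimately show ?thesis unfolding \<tau>_def by blast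
qed

end
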